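(* For any $b\in B_k$ there exist unique $b_-\in\mathcal{U}_-$ and $b_+\in\mathcal{P}_+$ such that $b=b_-b_+$.
   Context: Let $\mathfrak{g}=\mathfrak{gl}_n(\mathbb{C})$, $\mathfrak{t}$ a Cartan subalgebra, $k>1$, $T=\sum_{i=1}^{k-1}T_iz^{-i}$ with $T_i\in\mathfrak{t}$, $T_{k-1}\neq0$. $B_k=\{b=\sum_{i=0}^{k-1}b_iz^i:b_0=1,b_i\in\mathfrak{g}\}\subset\mathrm{GL}_n(\mathbb{C}[z]/(z^k))$. For $i=0,\dots,k-2$ let $\mathbb{C}^n=\bigoplus_{p\in J_i}V^{(i)}_p$ be the decomposition into simultaneous eigenspaces of $(T_{i+1},\dots,T_{k-1})$, with $\pi_i:J_j\to J_i$ ($j\le i$) the natural surjections; fix total orders on the $J_i$ such that for $i<k-2$, $\pi_{i+1}(p)<\pi_{i+1}(q)\Rightarrow p<q$. Let $\mathfrak{p}_i^+=\bigoplus_{p\ge q}\mathrm{Hom}(V^{(i)}_p,V^{(i)}_q)$, $\mathfrak{u}_i^-=\bigoplus_{p<q}\mathrm{Hom}(V^{(i)}_p,V^{(i)}_q)$ (sums over $p,q\in J_i$), $\mathfrak{p}^+_{k-1}=\mathfrak{g}$, $\mathfrak{u}^-_{k-1}=0$. $\mathcal{U}_-=\{b\in B_k:b_i\in\mathfrak{u}_i^-,1\le i\le k-1\}$, $\mathcal{P}_+=\{b\in B_k:b_i\in\mathfrak{p}_i^+,1\le i\le k-1\}$. *)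

theory Defs
  imports "HOL-Analysis.Analysis"
begin

type_synonym 'n mat = "complex ^ 'n ^ 'n"

definition diag_mat :: "complex ^ ('n::finite) \<Rightarrow> 'n mat" where
  "diag_mat d = (\<chi> i j. if i = j then d $ i else 0)"

definition cartan :: "('n::finite) mat \<Rightarrow> 'n mat set" where
  "cartan P = {P ** diag_mat d ** matrix_inv P | d. True}"

text \<open>Simultaneous eigenspace V^{(i)}_p of (T_{i+1},...,T_{k-1}) for eigenvalue tuple p
  (p is a function on indices; only its values on {i+1..k-1} matter).\<close>
definition eigsp :: "(nat \<Rightarrow> ('n::finite) mat) \<Rightarrow> nat \<Rightarrow> nat \<Rightarrow> (nat \<Rightarrow> complex) \<Rightarrow> (complex ^ 'n) set" where
  "eigsp T k i p = {v. \<forall>j\<in>{i+1..k-1}. T j *v v = p j *s v}"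

definition Jset :: "(nat \<Rightarrow> ('n::finite) mat) \<Rightarrow> nat \<Rightarrow> nat \<Rightarrow> (nat \<Rightarrow> complex) set" where
  "Jset T k i = {p. (\<forall>j. j \<notin> {i+1..k-1} \<longrightarrow> p j = 0) \<and> eigsp T k i p \<noteq> {0}}"

text \<open>Natural surjection J_i \<rightarrow> J_{i+1}: forget the (i+1)-th eigenvalue.\<close>
definition proj_next :: "nat \<Rightarrow> (nat \<Rightarrow> complex) \<Rightarrow> (nat \<Rightarrow> complex)" where
  "proj_next i p = (\<lambda>j. if j = i + 1 then 0 else p j)"

text \<open>ord i p q means p < q in the chosen total order on J_i.\<close>
definition strict_total_on :: "'a set \<Rightarrow> ('a \<Rightarrow> 'a \<Rightarrow> bool) \<Rightarrow> bool" where
  "strict_total_on A r \<longleftrightarrow>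
     (\<forall>p\<in>A. \<not> r p p) \<and>
     (\<forall>p\<in>A. \<forall>q\<in>A. \<forall>s\<in>A. r p q \<longrightarrow> r q s \<longrightarrow> r p s) \<and>
     (\<forall>p\<in>A. \<forall>q\<in>A. p \<noteq> q \<longrightarrow> r p q \<or> r q p)"

text \<open>p_i^+ = \<Oplus>_{p \<ge> q} Hom(V_p, V_q): X maps each V_p into the sum of the V_q with q \<le> p;
  p_{k-1}^+ = gl_n.\<close>
definition pplus :: "(nat \<Rightarrow> ('n::finite) mat) \<Rightarrow> nat \<Rightarrow> (nat \<Rightarrow> (nat \<Rightarrow> complex) \<Rightarrow> (nat \<Rightarrow> complex) \<Rightarrow> bool)
    \<Rightarrow> nat \<Rightarrow> 'n mat set" where
  "pplus T k ord i = (if i = k - 1 then UNIV else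
     {X. \<forall>p\<in>Jset T k i. \<forall>v\<in>eigsp T k i p.
        X *v v \<in> vec.span (\<Union>q\<in>{q\<in>Jset T k i. q = p \<or> ord i q p}. eigsp T k i q)})"

text \<open>u_i^- = \<Oplus>_{p < q} Hom(V_p, V_q); u_{k-1}^- = 0.\<close>
definition uminus_sp :: "(nat \<Rightarrow> ('n::finite) mat) \<Rightarrow> nat \<Rightarrow> (nat \<Rightarrow> (nat \<Rightarrow> complex) \<Rightarrow> (nat \<Rightarrow> complex) \<Rightarrow> bool)
    \<Rightarrow> nat \<Rightarrow> 'n mat set" where
  "uminus_sp T k ord i = (if i = k - 1 then {0} else
     {X. \<forall>p\<in>Jset T k i. \<forall>v\<in>eigsp T k i p.
        X *v v \<in> vec.span (\<Union>q\<in>{q\<in>Jset T k i. ord i p q}. eigsp T k i q)})"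

text \<open>Elements of gl_n(C[z]/(z^k)) as coefficient sequences b_0, b_1, ... with b_i = 0 for i \<ge> k.\<close>
definition Bk :: "nat \<Rightarrow> (nat \<Rightarrow> ('n::finite) mat) set" where
  "Bk k = {b. b 0 = mat 1 \<and> (\<forall>i\<ge>k. b i = 0)}"

definition tmul :: "nat \<Rightarrow> (nat \<Rightarrow> ('n::finite) mat) \<Rightarrow> (nat \<Rightarrow> 'n mat) \<Rightarrow> (nat \<Rightarrow> 'n mat)" where
  "tmul k b c = (\<lambda>m. if m < k then (\<Sum>i\<le>m. b i ** c (m - i)) else 0)"

definition Uminus :: "(nat \<Rightarrow> ('n::finite) mat) \<Rightarrow> nat \<Rightarrow> (nat \<Rightarrow> (nat \<Rightarrow> complex) \<Rightarrow> (nat \<Rightarrow> complex) \<Rightarrow> bool)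
    \<Rightarrow> (nat \<Rightarrow> 'n mat) set" where
  "Uminus T k ord = {b\<in>Bk k. \<forall>i\<in>{1..k-1}. b i \<in> uminus_sp T k ord i}"

definition Pplus :: "(nat \<Rightarrow> ('n::finite) mat) \<Rightarrow> nat \<Rightarrow> (nat \<Rightarrow> (nat \<Rightarrow> complex) \<Rightarrow> (nat \<Rightarrow> complex) \<Rightarrow> bool)
    \<Rightarrow> (nat \<Rightarrow> 'n mat) set" where
  "Pplus T k ord = {b\<in>Bk k. \<forall>i\<in>{1..k-1}. b i \<in> pplus T k ord i}"

end

theory Submission
  imports Defs
begin

lemma diag_mv: "diag_mat e *v w = (\<chi> l. e$l * w$l)"
  by (simp add: diag_mat_def matrix_vector_mult_def vec_eq_iff if_distrib if_distribR cong: if_cong)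

lemma mv_sum: "finite S \<Longrightarrow> (A::'a::comm_ring_1^'n^'m) *v sum f S = (\<Sum>x\<in>S. A *v f x)"
  by (induction S rule: finite_induct) (simp_all add: matrix_vector_right_distrib)

locale eigsetup =
  fixes P Q :: "complex^'n::finite^'n" and d :: "nat \<Rightarrow> complex^'n"
    and T :: "nat \<Rightarrow> complex^'n^'n" and k i :: nat
  assumes PQ: "P ** Q = mat 1" and QP: "Q ** P = mat 1"
    and Td: "\<forall>j\<in>{i+1..k-1}. T j = P ** diag_mat (d j) ** Q"
begin

definition pl :: "'n \<Rightarrow> nat \<Rightarrow> complex" where
  "pl l = (\<lambda>j. if j \<in> {i+1..k-1} then d j $ l else 0)"

lemma QPv: "Q *v (P *v x) = x" by (simp add: matrix_vector_mul_assoc QP)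
lemma PQv: "P *v (Q *v x) = x" by (simp add: matrix_vector_mul_assoc PQ)

lemma eigsp_iff: "v \<in> eigsp T k i p \<longleftrightarrow> (\<forall>l. (Q *v v)$l \<noteq> 0 \<longrightarrow> (\<forall>j\<in>{i+1..k-1}. d j $ l = p j))"
proof -
  have *: "T j *v v = p j *s v \<longleftrightarrow> (\<forall>l. (Q *v v)$l \<noteq> 0 \<longrightarrow> d j $ l = p j)" if j: "j\<in>{i+1..k-1}" for j
  proof -
    let ?w = "Q *v v"
    have e1: "T j *v v = P *v (diag_mat (d j) *v ?w)" using Td j by (simp add: matrix_vector_mul_assoc matrix_mul_assoc)
    have "T j *v v = p j *s v \<longleftrightarrow> diag_mat (d j) *v ?w = p j *s ?w"
    proof
      assume "T j *v v = p j *s v"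
      hence "Q *v (T j *v v) = Q *v (p j *s v)" by simp
      thus "diag_mat (d j) *v ?w = p j *s ?w" unfolding e1 QPv by (simp add: vector_scalar_commute)
    next
      assume "diag_mat (d j) *v ?w = p j *s ?w"
      thus "T j *v v = p j *s v" unfolding e1 by (simp add: vector_scalar_commute PQv)
    qed
    also have "\<dots> \<longleftrightarrow> (\<forall>l. ?w$l \<noteq> 0 \<longrightarrow> d j $ l = p j)"
      by (auto simp: diag_mv vec_eq_iff mult.commute)
    finally show ?thesis .
  qed
  show ?thesis unfolding eigsp_def using * by blast
qed

lemma pl_eigsp: "P *v axis l 1 \<in> eigsp T k i (pl l)"
  unfolding eigsp_iff QPv by (auto simp: pl_def axis_def)

lemma Jset_iff: "p \<in> Jset T k i \<longleftrightarrow> (\<exists>l. p = pl l)"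
proof
  assume "p \<in> Jset T k i"
  then have z: "\<forall>j. j \<notin> {i+1..k-1} \<longrightarrow> p j = 0" and ne: "eigsp T k i p \<noteq> {0}"
    unfolding Jset_def by auto
  have "0 \<in> eigsp T k i p" unfolding eigsp_def by simp
  with ne obtain v where v: "v \<in> eigsp T k i p" "v \<noteq> 0" by blast
  have "Q *v v \<noteq> 0" using v(2) PQv[of v] by auto
  then obtain l where l: "(Q *v v)$l \<noteq> 0" by (auto simp: vec_eq_iff)
  with v(1) have "\<forall>j\<in>{i+1..k-1}. d j $ l = p j" unfolding eigsp_iff by blast
  with z have "p = pl l" by (auto simp: pl_def fun_eq_iff)
  thus "\<exists>l. p = pl l" by blast
next
  assume "\<exists>l. p = pl l"
  then obtain l where p: "p = pl l" by blast
  have "P *v axis l 1 \<noteq> 0" using QPv[of "axis l 1"] by auto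
  hence "eigsp T k i p \<noteq> {0}" using pl_eigsp[of l] p by auto
  moreover have "\<forall>j. j \<notin> {i+1..k-1} \<longrightarrow> p j = 0" using p by (simp add: pl_def)
  ultimately show "p \<in> Jset T k i" unfolding Jset_def by blast
qed

lemma eigsp_J: "q \<in> Jset T k i \<Longrightarrow> v \<in> eigsp T k i q \<longleftrightarrow> (\<forall>l. (Q *v v)$l \<noteq> 0 \<longrightarrow> pl l = q)"
proof -
  assume "q \<in> Jset T k i"
  then obtain l0 where q: "q = pl l0" using Jset_iff by blast
  have "(\<forall>j\<in>{i+1..k-1}. d j $ l = q j) \<longleftrightarrow> pl l = q" for l
    unfolding q pl_def by (auto simp: fun_eq_iff)
  thus ?thesis unfolding eigsp_iff by blast
qed

definition SQ :: "(nat \<Rightarrow> complex) set \<Rightarrow> (complex^'n) set" where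
  "SQ A = {v. \<forall>l. (Q *v v)$l \<noteq> 0 \<longrightarrow> pl l \<in> A}"

lemma span_SQ:
  assumes "A \<subseteq> Jset T k i"
  shows "vec.span (\<Union>q\<in>A. eigsp T k i q) = SQ A"
proof
  have "vec.subspace (SQ A)"
    unfolding vec.subspace_def SQ_def
    by (auto simp: matrix_vector_right_distrib vector_scalar_commute) (metis add.left_neutral)
  moreover have "(\<Union>q\<in>A. eigsp T k i q) \<subseteq> SQ A"
    using assms eigsp_J unfolding SQ_def by blast
  ultimately show "vec.span (\<Union>q\<in>A. eigsp T k i q) \<subseteq> SQ A"
    by (rule vec.span_minimal[rotated])
next
  show "SQ A \<subseteq> vec.span (\<Union>q\<in>A. eigsp T k i q)"
  proof
    fix v assume v: "v \<in> SQ A"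
    let ?w = "Q *v v"
    have "v = P *v (\<Sum>l\<in>UNIV. ?w$l *s axis l 1)" using PQv basis_expansion by metis
    also have "\<dots> = (\<Sum>l\<in>UNIV. ?w$l *s (P *v axis l 1))"
      by (simp add: mv_sum vector_scalar_commute)
    also have "\<dots> \<in> vec.span (\<Union>q\<in>A. eigsp T k i q)"
    proof (rule vec.span_sum)
      fix l
      show "?w$l *s (P *v axis l 1) \<in> vec.span (\<Union>q\<in>A. eigsp T k i q)"
      proof (cases "?w$l = 0")
        case True thus ?thesis by (simp add: vec.span_zero)
      next
        case False
        hence "pl l \<in> A" using v unfolding SQ_def by blast
        hence "P *v axis l 1 \<in> (\<Union>q\<in>A. eigsp T k i q)" using pl_eigsp by blast
        thus ?thesis by (intro vec.span_scale vec.span_base)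
      qed
    qed
    finally show "v \<in> vec.span (\<Union>q\<in>A. eigsp T k i q)" .
  qed
qed

lemma mem_iff:
  "(\<forall>p\<in>Jset T k i. \<forall>v\<in>eigsp T k i p. X *v v \<in> vec.span (\<Union>q\<in>{q\<in>Jset T k i. R p q}. eigsp T k i q))
   \<longleftrightarrow> (\<forall>a c. (Q ** X ** P)$a$c \<noteq> 0 \<longrightarrow> R (pl c) (pl a))"
proof -
  have sp: "vec.span (\<Union>q\<in>{q\<in>Jset T k i. R p q}. eigsp T k i q) = SQ {q\<in>Jset T k i. R p q}" for p
    by (rule span_SQ) auto
  have J: "pl l \<in> Jset T k i" for l using Jset_iff by blast
  show ?thesis unfolding sp
  proof
    assume H: "\<forall>p\<in>Jset T k i. \<forall>v\<in>eigsp T k i p. X *v v \<in> SQ {q\<in>Jset T k i. R p q}"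
    show "\<forall>a c. (Q ** X ** P)$a$c \<noteq> 0 \<longrightarrow> R (pl c) (pl a)"
    proof (intro allI impI)
      fix a c assume ne: "(Q ** X ** P)$a$c \<noteq> 0"
      have "X *v (P *v axis c 1) \<in> SQ {q\<in>Jset T k i. R (pl c) q}"
        using H J pl_eigsp by blast
      moreover have "(Q *v (X *v (P *v axis c 1))) = (Q ** X ** P) *v axis c 1"
        by (simp add: matrix_vector_mul_assoc matrix_mul_assoc)
      moreover have "((Q ** X ** P) *v axis c 1)$a = (Q ** X ** P)$a$c"
        by (simp add: matrix_vector_mult_def axis_def if_distrib cong: if_cong)
      ultimately have "(Q *v (X *v (P *v axis c 1)))$a \<noteq> 0 \<and> X *v (P *v axis c 1) \<in> SQ {q\<in>Jset T k i. R (pl c) q}"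
        using ne by simp
      hence "pl a \<in> {q\<in>Jset T k i. R (pl c) q}" unfolding SQ_def by blast
      thus "R (pl c) (pl a)" by simp
    qed
  next
    assume H: "\<forall>a c. (Q ** X ** P)$a$c \<noteq> 0 \<longrightarrow> R (pl c) (pl a)"
    show "\<forall>p\<in>Jset T k i. \<forall>v\<in>eigsp T k i p. X *v v \<in> SQ {q\<in>Jset T k i. R p q}"
    proof (intro ballI)
      fix p v assume p: "p \<in> Jset T k i" and v: "v \<in> eigsp T k i p"
      let ?w = "Q *v v"
      have eq: "Q *v (X *v v) = (Q ** X ** P) *v ?w"
      proof -
        have "(Q ** X ** P) *v ?w = Q *v (X *v (P *v ?w))" by (simp add: matrix_vector_mul_assoc matrix_mul_assoc)
        thus ?thesis by (simp add: PQv)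
      qed
      show "X *v v \<in> SQ {q\<in>Jset T k i. R p q}"
        unfolding SQ_def
      proof (rule CollectI, intro allI impI)
        fix a assume "(Q *v (X *v v))$a \<noteq> 0"
        hence "(\<Sum>c\<in>UNIV. (Q ** X ** P)$a$c * ?w$c) \<noteq> 0"
          unfolding eq by (simp add: matrix_vector_mult_def)
        then obtain c where c: "(Q ** X ** P)$a$c * ?w$c \<noteq> 0"
        proof -
          assume r: "\<And>c. (Q ** X ** P)$a$c * ?w$c \<noteq> 0 \<Longrightarrow> thesis"
          assume s: "(\<Sum>c\<in>UNIV. (Q ** X ** P)$a$c * ?w$c) \<noteq> 0"
          show thesis
          proof (rule ccontr)
            assume "\<not> thesis"
            hence "\<forall>c. (Q ** X ** P)$a$c * ?w$c = 0" using r by blast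
            hence "(\<Sum>c\<in>UNIV. (Q ** X ** P)$a$c * ?w$c) = 0" by (intro sum.neutral) blast
            thus False using s by simp
          qed
        qed
        hence c1: "(Q ** X ** P)$a$c \<noteq> 0" and c2: "?w$c \<noteq> 0" by auto
        have "pl c = p" using c2 v eigsp_J[OF p] by blast
        hence "R p (pl a)" using H c1 by blast
        thus "pl a \<in> {q\<in>Jset T k i. R p q}" using J by blast
      qed
    qed
  qed
qed

lemma conj1: "Q ** (P ** A ** Q) ** P = A"
proof -
  have "Q ** (P ** A ** Q) ** P = (Q ** P) ** A ** (Q ** P)" by (simp add: matrix_mul_assoc)
  thus ?thesis by (simp add: QP)
qed

lemma conj2: "P ** (Q ** A ** P) ** Q = A"
proof -
  have "P ** (Q ** A ** P) ** Q = (P ** Q) ** A ** (P ** Q)" by (simp add: matrix_mul_assoc)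
  thus ?thesis by (simp add: PQ)
qed

lemma um_iff: "i \<noteq> k-1 \<Longrightarrow> U \<in> uminus_sp T k ord i \<longleftrightarrow> (\<forall>a c. (Q ** U ** P)$a$c \<noteq> 0 \<longrightarrow> ord i (pl c) (pl a))"
  using mem_iff[of U "\<lambda>p q. ord i p q"] by (simp add: uminus_sp_def)

lemma pp_iff: "i \<noteq> k-1 \<Longrightarrow> U \<in> pplus T k ord i \<longleftrightarrow> (\<forall>a c. (Q ** U ** P)$a$c \<noteq> 0 \<longrightarrow> pl a = pl c \<or> ord i (pl a) (pl c))"
  using mem_iff[of U "\<lambda>p q. q = p \<or> ord i q p"] by (simp add: pplus_def)

lemma madd_r: "(A + B) ** (C::complex^'n^'n) = A ** C + B ** C"
  by (vector matrix_matrix_mult_def sum.distrib distrib_right)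

lemma conj_diff: "Q ** (A - B) ** P = Q ** A ** P - Q ** B ** P"
proof -
  have "Q ** A ** P = Q ** B ** P + Q ** (A - B) ** P"
    using matrix_add_ldistrib[of Q B "A - B"] madd_r[of "Q ** B" "Q ** (A - B)" P] by simp
  thus ?thesis by simp
qed

lemma dec_exists:
  assumes tot: "strict_total_on (Jset T k i) (ord i)" and ik: "i \<noteq> k-1"
  shows "\<exists>U Pm. U \<in> uminus_sp T k ord i \<and> Pm \<in> pplus T k ord i \<and> X = U + Pm"
proof -
  let ?Y = "Q ** X ** P"
  define Um where "Um = (\<chi> a c. if ord i (pl c) (pl a) then ?Y$a$c else 0)"
  define Pp where "Pp = (\<chi> a c. if ord i (pl c) (pl a) then 0 else ?Y$a$c)"
  have sum: "Um + Pp = ?Y" by (simp add: Um_def Pp_def vec_eq_iff)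
  have "X = P ** ?Y ** Q" by (simp add: conj2)
  also have "\<dots> = P ** Um ** Q + P ** Pp ** Q"
    unfolding sum[symmetric] by (simp add: matrix_add_ldistrib madd_r)
  finally have X: "X = P ** Um ** Q + P ** Pp ** Q" .
  have J: "pl l \<in> Jset T k i" for l using Jset_iff by blast
  have "P ** Um ** Q \<in> uminus_sp T k ord i"
    unfolding um_iff[OF ik] conj1 by (simp add: Um_def)
  moreover have "P ** Pp ** Q \<in> pplus T k ord i"
    unfolding pp_iff[OF ik] conj1
  proof (intro allI impI)
    fix a c assume "Pp$a$c \<noteq> 0"
    hence n: "\<not> ord i (pl c) (pl a)" by (auto simp: Pp_def)
    have "\<forall>p\<in>Jset T k i. \<forall>q\<in>Jset T k i. p \<noteq> q \<longrightarrow> ord i p q \<or> ord i q p"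
      using tot unfolding strict_total_on_def by blast
    hence "pl a \<noteq> pl c \<longrightarrow> ord i (pl a) (pl c) \<or> ord i (pl c) (pl a)" using J by blast
    thus "pl a = pl c \<or> ord i (pl a) (pl c)" using n by blast
  qed
  ultimately show ?thesis using X by blast
qed

lemma dec_unique:
  assumes tot: "strict_total_on (Jset T k i) (ord i)" and ik: "i \<noteq> k-1"
    and U: "U \<in> uminus_sp T k ord i" and Pm: "Pm \<in> pplus T k ord i"
    and U': "U' \<in> uminus_sp T k ord i" and Pm': "Pm' \<in> pplus T k ord i"
    and eq: "U + Pm = U' + Pm'"
  shows "U = U' \<and> Pm = Pm'"
proof -
  have J: "pl l \<in> Jset T k i" for l using Jset_iff by blast
  have d: "U - U' = Pm' - Pm"
  proof -
    have "U - U' = (U + Pm) - (U' + Pm)" by (rule add_diff_cancel_right[symmetric])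
    also have "\<dots> = (U' + Pm') - (U' + Pm)" using eq by simp
    also have "\<dots> = Pm' - Pm" by (rule add_diff_cancel_left)
    finally show ?thesis .
  qed
  let ?Z = "Q ** (U - U') ** P"
  have Z0: "?Z = 0"
  proof (rule ccontr)
    assume nz: "?Z \<noteq> 0"
    have "\<exists>a c. ?Z$a$c \<noteq> 0"
    proof (rule ccontr)
      assume "\<not> (\<exists>a c. ?Z$a$c \<noteq> 0)"
      hence "\<forall>a c. ?Z$a$c = 0" by blast
      hence "?Z = 0" by (simp add: vec_eq_iff)
      thus False using nz by contradiction
    qed
    then obtain a c where ne: "?Z$a$c \<noteq> 0" by blast
    have z1: "?Z$a$c = (Q ** U ** P)$a$c - (Q ** U' ** P)$a$c"
      by (simp only: conj_diff vector_minus_component)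
    have z2: "?Z$a$c = (Q ** Pm' ** P)$a$c - (Q ** Pm ** P)$a$c"
      by (simp only: d conj_diff vector_minus_component)
    have uu: "\<forall>a c. (Q ** U ** P)$a$c \<noteq> 0 \<longrightarrow> ord i (pl c) (pl a)"
      "\<forall>a c. (Q ** U' ** P)$a$c \<noteq> 0 \<longrightarrow> ord i (pl c) (pl a)"
      using U U' um_iff[OF ik] by blast+
    have pp: "\<forall>a c. (Q ** Pm ** P)$a$c \<noteq> 0 \<longrightarrow> pl a = pl c \<or> ord i (pl a) (pl c)"
      "\<forall>a c. (Q ** Pm' ** P)$a$c \<noteq> 0 \<longrightarrow> pl a = pl c \<or> ord i (pl a) (pl c)"
      using Pm Pm' pp_iff[OF ik] by blast+
    have o1: "ord i (pl c) (pl a)"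
    proof (cases "(Q ** U ** P)$a$c = 0")
      case True
      hence "(Q ** U' ** P)$a$c \<noteq> 0" using ne z1 by simp
      thus ?thesis using uu(2) by blast
    next
      case False thus ?thesis using uu(1) by blast
    qed
    have o2: "pl a = pl c \<or> ord i (pl a) (pl c)"
    proof (cases "(Q ** Pm ** P)$a$c = 0")
      case True
      hence "(Q ** Pm' ** P)$a$c \<noteq> 0" using ne z2 by simp
      thus ?thesis using pp(2) by blast
    next
      case False thus ?thesis using pp(1) by blast
    qed
    have irr: "\<forall>p\<in>Jset T k i. \<not> ord i p p"
      using tot unfolding strict_total_on_def by (rule conjunct1)
    have tr: "\<forall>p\<in>Jset T k i. \<forall>q\<in>Jset T k i. \<forall>s\<in>Jset T k i. ord i p q \<longrightarrow> ord i q s \<longrightarrow> ord i p s"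
      using tot unfolding strict_total_on_def by (rule conjunct1[OF conjunct2])
    have i1: "\<not> ord i (pl c) (pl c)" using irr J by blast
    show False
    proof (cases "pl a = pl c")
      case True thus False using o1 i1 by simp
    next
      case False
      hence o3: "ord i (pl a) (pl c)" using o2 by simp
      have "ord i (pl c) (pl c)" using tr J o1 o3 by blast
      thus False using i1 by contradiction
    qed
  qed
  have "U - U' = P ** ?Z ** Q" by (rule conj2[symmetric])
  also have "\<dots> = 0" using Z0 by simp
  finally have "U = U'" by simp
  moreover from this have "Pm = Pm'" using eq by simp
  ultimately show ?thesis by blast
qed

end

lemma sum_split:
  fixes f :: "nat \<Rightarrow> 'a::comm_monoid_add"
  assumes "m \<ge> 1"
  shows "(\<Sum>i\<le>m. f i) = f 0 + f m + (\<Sum>i\<in>{1..<m}. f i)"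
proof -
  have "{..m} = insert 0 (insert m {1..<m})" using assms by auto
  thus ?thesis using assms by (simp add: add.assoc)
qed

lemma abstract_dec:
  fixes b :: "nat \<Rightarrow> complex^'n::finite^'n"
  assumes ex: "\<And>m X. m\<in>{1..k-1} \<Longrightarrow> \<exists>U Pm. U \<in> UM m \<and> Pm \<in> PP m \<and> X = U + Pm"
    and un: "\<And>m U Pm U' Pm'. m\<in>{1..k-1} \<Longrightarrow> U\<in>UM m \<Longrightarrow> Pm\<in>PP m \<Longrightarrow> U'\<in>UM m \<Longrightarrow> Pm'\<in>PP m
               \<Longrightarrow> U+Pm = U'+Pm' \<Longrightarrow> U=U' \<and> Pm=Pm'"
    and b: "b \<in> Bk k" and k0: "k > 0"
  shows "\<exists>!bmp. fst bmp \<in> {x\<in>Bk k. \<forall>i\<in>{1..k-1}. x i \<in> UM i}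
           \<and> snd bmp \<in> {y\<in>Bk k. \<forall>i\<in>{1..k-1}. y i \<in> PP i}
           \<and> b = tmul k (fst bmp) (snd bmp)"
proof (rule ex_ex1I)
  have claim: "N \<le> k-1 \<Longrightarrow> \<exists>x y. x 0 = mat 1 \<and> y 0 = mat 1 \<and>
      (\<forall>m\<in>{1..N}. x m \<in> UM m \<and> y m \<in> PP m \<and> b m = (\<Sum>i\<le>m. x i ** y (m-i)))" for N
  proof (induction N)
    case 0 show ?case by (intro exI[of _ "\<lambda>_. mat 1"]) auto
  next
    case (Suc N)
    then obtain x y where xy: "x 0 = mat 1" "y 0 = mat 1"
      "\<forall>m\<in>{1..N}. x m \<in> UM m \<and> y m \<in> PP m \<and> b m = (\<Sum>i\<le>m. x i ** y (m-i))" by auto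
    define X where "X = b (Suc N) - (\<Sum>i\<in>{1..<Suc N}. x i ** y (Suc N - i))"
    obtain U Pm where UP: "U\<in>UM (Suc N)" "Pm \<in> PP (Suc N)" "X = U + Pm"
      using ex[of "Suc N" X] Suc.prems by auto
    define x' where "x' = x(Suc N := U)"
    define y' where "y' = y(Suc N := Pm)"
    have same: "(\<Sum>i\<le>m. x' i ** y' (m-i)) = (\<Sum>i\<le>m. x i ** y (m-i))" if "m \<le> N" for m
      using that by (intro sum.cong) (auto simp: x'_def y'_def)
    have "(\<Sum>i\<le>Suc N. x' i ** y' (Suc N - i)) = x' 0 ** y' (Suc N) + x' (Suc N) ** y' 0
           + (\<Sum>i\<in>{1..<Suc N}. x' i ** y' (Suc N - i))"
      using sum_split[of "Suc N" "\<lambda>i. x' i ** y' (Suc N - i)"] by simp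
    also have "(\<Sum>i\<in>{1..<Suc N}. x' i ** y' (Suc N - i)) = (\<Sum>i\<in>{1..<Suc N}. x i ** y (Suc N - i))"
      by (intro sum.cong) (auto simp: x'_def y'_def)
    also have "x' 0 ** y' (Suc N) + x' (Suc N) ** y' 0 = Pm + U"
      using xy by (simp add: x'_def y'_def)
    finally have new: "(\<Sum>i\<le>Suc N. x' i ** y' (Suc N - i)) = b (Suc N)"
      using UP(3) unfolding X_def by (simp add: algebra_simps)
    have x0: "x' 0 = mat 1" "y' 0 = mat 1" using xy by (auto simp: x'_def y'_def)
    have P3: "\<forall>m\<in>{1..Suc N}. x' m \<in> UM m \<and> y' m \<in> PP m \<and> b m = (\<Sum>i\<le>m. x' i ** y' (m-i))"
    proof
      fix m assume m: "m \<in> {1..Suc N}"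
      show "x' m \<in> UM m \<and> y' m \<in> PP m \<and> b m = (\<Sum>i\<le>m. x' i ** y' (m-i))"
      proof (cases "m = Suc N")
        case True thus ?thesis using UP new by (simp add: x'_def y'_def)
      next
        case False
        hence "m \<in> {1..N}" "m \<le> N" using m by auto
        thus ?thesis using xy(3) same[of m] False by (simp add: x'_def y'_def)
      qed
    qed
    show ?case using x0 P3 by blast
  qed
  obtain x y where xy: "x 0 = mat 1" "y 0 = mat 1"
      "\<forall>m\<in>{1..k-1}. x m \<in> UM m \<and> y m \<in> PP m \<and> b m = (\<Sum>i\<le>m. x i ** y (m-i))"
    using claim[of "k-1"] by auto
  have b0: "b 0 = mat 1" and bk: "\<And>m. m \<ge> k \<Longrightarrow> b m = 0" using b unfolding Bk_def by auto
  define x' where "x' = (\<lambda>m. if m < k then x m else 0)"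
  define y' where "y' = (\<lambda>m. if m < k then y m else 0)"
  have "x' \<in> {x\<in>Bk k. \<forall>i\<in>{1..k-1}. x i \<in> UM i}"
    using xy k0 by (auto simp: x'_def Bk_def)
  moreover have "y' \<in> {y\<in>Bk k. \<forall>i\<in>{1..k-1}. y i \<in> PP i}"
    using xy k0 by (auto simp: y'_def Bk_def)
  moreover have "b = tmul k x' y'"
  proof
    fix m
    show "b m = tmul k x' y' m"
    proof (cases "m < k")
      case False thus ?thesis using bk by (simp add: tmul_def)
    next
      case True
      have s: "(\<Sum>i\<le>m. x' i ** y' (m-i)) = (\<Sum>i\<le>m. x i ** y (m-i))"
        using True by (intro sum.cong) (auto simp: x'_def y'_def)
      show ?thesis
      proof (cases "m = 0")
        case True thus ?thesis using xy b0 k0 by (simp add: tmul_def x'_def y'_def)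
      next
        case False
        hence "m \<in> {1..k-1}" using \<open>m < k\<close> by auto
        thus ?thesis using xy(3) s \<open>m < k\<close> by (simp add: tmul_def)
      qed
    qed
  qed
  ultimately show "\<exists>bmp. fst bmp \<in> {x\<in>Bk k. \<forall>i\<in>{1..k-1}. x i \<in> UM i}
           \<and> snd bmp \<in> {y\<in>Bk k. \<forall>i\<in>{1..k-1}. y i \<in> PP i}
           \<and> b = tmul k (fst bmp) (snd bmp)"
    by (intro exI[of _ "(x', y')"]) simp
next
  fix p1 p2
  assume h1: "fst p1 \<in> {x\<in>Bk k. \<forall>i\<in>{1..k-1}. x i \<in> UM i}
           \<and> snd p1 \<in> {y\<in>Bk k. \<forall>i\<in>{1..k-1}. y i \<in> PP i}
           \<and> b = tmul k (fst p1) (snd p1)"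
    and h2: "fst p2 \<in> {x\<in>Bk k. \<forall>i\<in>{1..k-1}. x i \<in> UM i}
           \<and> snd p2 \<in> {y\<in>Bk k. \<forall>i\<in>{1..k-1}. y i \<in> PP i}
           \<and> b = tmul k (fst p2) (snd p2)"
  obtain x1 y1 where p1: "p1 = (x1, y1)" by (cases p1)
  obtain x2 y2 where p2: "p2 = (x2, y2)" by (cases p2)
  have A1: "x1 \<in> Bk k" "y1 \<in> Bk k" "\<forall>i\<in>{1..k-1}. x1 i \<in> UM i \<and> y1 i \<in> PP i" "b = tmul k x1 y1"
    using h1 p1 by auto
  have A2: "x2 \<in> Bk k" "y2 \<in> Bk k" "\<forall>i\<in>{1..k-1}. x2 i \<in> UM i \<and> y2 i \<in> PP i" "b = tmul k x2 y2"
    using h2 p2 by auto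
  have "x1 m = x2 m \<and> y1 m = y2 m" for m
  proof (induction m rule: less_induct)
    case (less m)
    show ?case
    proof (cases "m = 0 \<or> m \<ge> k")
      case True thus ?thesis using A1 A2 unfolding Bk_def by auto
    next
      case False
      hence m: "m \<in> {1..k-1}" "m \<ge> 1" "m < k" by auto
      have e1: "b m = (\<Sum>i\<le>m. x1 i ** y1 (m-i))" using A1(4) m by (simp add: tmul_def)
      have e2: "b m = (\<Sum>i\<le>m. x2 i ** y2 (m-i))" using A2(4) m by (simp add: tmul_def)
      have x10: "x1 0 = mat 1" "y1 0 = mat 1" "x2 0 = mat 1" "y2 0 = mat 1"
        using A1 A2 unfolding Bk_def by auto
      have ss: "(\<Sum>i\<in>{1..<m}. x1 i ** y1 (m-i)) = (\<Sum>i\<in>{1..<m}. x2 i ** y2 (m-i))"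
        by (intro sum.cong refl) (use less.IH in \<open>auto\<close>)
      have "y1 m + x1 m + (\<Sum>i\<in>{1..<m}. x1 i ** y1 (m-i)) = y2 m + x2 m + (\<Sum>i\<in>{1..<m}. x2 i ** y2 (m-i))"
        using e1 e2 sum_split[OF m(2), of "\<lambda>i. x1 i ** y1 (m-i)"] sum_split[OF m(2), of "\<lambda>i. x2 i ** y2 (m-i)"]
          x10 by simp
      hence "x1 m + y1 m = x2 m + y2 m" using ss by (simp add: algebra_simps)
      thus ?thesis using un[OF m(1)] A1(3) A2(3) m(1) by blast
    qed
  qed
  thus "p1 = p2" using p1 p2 by (auto simp: fun_eq_iff)
qed

theorem lemma3p5:
  fixes T :: "nat \<Rightarrow> complex ^ 'n ^ 'n" and P :: "complex ^ 'n ^ 'n" and k :: nat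
    and ord :: "nat \<Rightarrow> (nat \<Rightarrow> complex) \<Rightarrow> (nat \<Rightarrow> complex) \<Rightarrow> bool"
    and b :: "nat \<Rightarrow> complex ^ 'n ^ 'n"
  assumes "invertible P"
    and "k > 1"
    and "\<forall>i\<in>{1..k-1}. T i \<in> cartan P"
    and "T (k - 1) \<noteq> 0"
    and "\<forall>i\<le>k-2. strict_total_on (Jset T k i) (ord i)"
    and "\<forall>i<k-2. \<forall>p\<in>Jset T k i. \<forall>q\<in>Jset T k i.
           ord (i+1) (proj_next i p) (proj_next i q) \<longrightarrow> ord i p q"
    and "b \<in> Bk k"
  shows "\<exists>!bmp. fst bmp \<in> Uminus T k ord \<and> snd bmp \<in> Pplus T k ord \<and>
                b = tmul k (fst bmp) (snd bmp)"
proof -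
  let ?Q = "matrix_inv P"
  have inv: "P ** ?Q = mat 1 \<and> ?Q ** P = mat 1"
    using assms(1) unfolding invertible_def matrix_inv_def by (rule someI_ex)
  have "\<forall>j\<in>{1..k-1}. \<exists>e. T j = P ** diag_mat e ** ?Q"
    using assms(3) unfolding cartan_def by blast
  then obtain d where d: "\<forall>j\<in>{1..k-1}. T j = P ** diag_mat (d j) ** ?Q"
    by (metis bchoice)
  have E: "eigsetup P ?Q d T k m" for m
    using inv d by unfold_locales auto
  have k0: "k > 0" using assms(2) by simp
  show ?thesis
    unfolding Uminus_def Pplus_def
  proof (rule abstract_dec[OF _ _ assms(7) k0])
    fix m X assume m: "m \<in> {1..k-1}"
    show "\<exists>U Pm. U \<in> uminus_sp T k ord m \<and> Pm \<in> pplus T k ord m \<and> X = U + Pm"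
    proof (cases "m = k-1")
      case True thus ?thesis by (auto simp: uminus_sp_def pplus_def)
    next
      case False
      hence "strict_total_on (Jset T k m) (ord m)" using assms(5) m by auto
      thus ?thesis using eigsetup.dec_exists[OF E] False by blast
    qed
  next
    fix m U Pm U' Pm' assume m: "m \<in> {1..k-1}"
      and h: "U \<in> uminus_sp T k ord m" "Pm \<in> pplus T k ord m"
        "U' \<in> uminus_sp T k ord m" "Pm' \<in> pplus T k ord m" "U + Pm = U' + Pm'"
    show "U = U' \<and> Pm = Pm'"
    proof (cases "m = k-1")
      case True thus ?thesis using h by (auto simp: uminus_sp_def)
    next
      case False
      hence "strict_total_on (Jset T k m) (ord m)" using assms(5) m by auto
      thus ?thesis using eigsetup.dec_unique[OF E _ False h] by blast
    qed
  qed
qed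

end
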